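(* Let $\mathbf{s}=(s_n)_{n\geq1}$ be a strictly increasing sequence of positive integers such that $s_n$ divides $s_{n+1}$ for all $n$. Then there exists a continuous injective map $\pi\colon G_{\mathbf{s}}\to\mathbb{R}$ such that the map $f=\pi\circ T_{\mathbf{s}}\circ\pi^{-1}$ on the Cantor set $\pi(G_{\mathbf{s}})$ satisfies $f'(x)=0$ for every $x\in\pi(G_{\mathbf{s}})$.
   Context: For $n\geq1$ let $\pi_n\colon\mathbb{Z}_{s_{n+1}}\to\mathbb{Z}_{s_n}$, $\pi_n(m)=m \bmod s_n$. Let $G_{\mathbf{s}}=\{x\in\prod_{n\geq1}\mathbb{Z}_{s_n}: x_n=\pi_n(x_{n+1})\text{ for all }n\}$ with the product topology (each $\mathbb{Z}_{s_n}$ discrete), and $T_{\mathbf{s}}\colon G_{\mathbf{s}}\to G_{\mathbf{s}}$ given by $T_{\mathbf{s}}(x)_n=x_n+1 \pmod{s_n}$. For $K\subseteq\mathbb{R}$ perfect and $f\colon K\to K$, $f'(x)=\lim_{y\to x,\,y\in K\setminus\{x\}}\frac{f(y)-f(x)}{y-x}$. *)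

theory Defs
  imports "HOL-Analysis.Analysis"
begin

text \<open>Sequences are indexed by n >= 1; a point of G_s is a function nat => nat
  (nat carries the discrete topology, nat => nat the product topology).
  The unused coordinate 0 is normalised to 0.\<close>

definition odometer_space :: "(nat \<Rightarrow> nat) \<Rightarrow> (nat \<Rightarrow> nat) set" where
  "odometer_space s = {x. x 0 = 0 \<and> (\<forall>n\<ge>1. x n < s n \<and> x n = x (Suc n) mod s n)}"

definition odometer_map :: "(nat \<Rightarrow> nat) \<Rightarrow> (nat \<Rightarrow> nat) \<Rightarrow> (nat \<Rightarrow> nat)" where
  "odometer_map s x = (\<lambda>n. if n = 0 then 0 else (x n + 1) mod s n)"

definition rel_deriv_is :: "(real \<Rightarrow> real) \<Rightarrow> real set \<Rightarrow> real \<Rightarrow> real \<Rightarrow> bool" where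
  "rel_deriv_is f K x d \<longleftrightarrow> ((\<lambda>y. (f y - f x) / (y - x)) \<longlongrightarrow> d) (at x within K)"

end

theory Submission
  imports Defs
begin

locale odo =
  fixes s :: "nat \<Rightarrow> nat"
  assumes pos: "\<forall>n\<ge>1. 0 < s n"
    and incr: "\<forall>n\<ge>1. s n < s (Suc n)"
    and dvd: "\<forall>n\<ge>1. s n dvd s (Suc n)"
begin

definition t :: "nat \<Rightarrow> nat" where "t n = (if n = 0 then 1 else s n)"
definition r :: "nat \<Rightarrow> nat" where "r n = t (Suc n) div t n"
definition lam :: "nat \<Rightarrow> real" where "lam n = 1 / (2 * (real (r n) + 1) * (real n + 1))"
definition rho :: "nat \<Rightarrow> nat \<Rightarrow> nat" where "rho n c = (c + t n - t (n - 1) - 1) mod t n"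
fun eps :: "nat \<Rightarrow> real" where
  "eps 0 = 1"
| "eps (Suc n) = eps n * lam n ^ t n / (8 * real (r (Suc n)))"
definition w :: "nat \<Rightarrow> nat \<Rightarrow> real" where "w n c = eps n * lam n ^ rho n c"
definition trm :: "(nat \<Rightarrow> nat) \<Rightarrow> nat \<Rightarrow> real" where
  "trm x k = w k (x k) * real (x (Suc k) div t k)"
definition pi :: "(nat \<Rightarrow> nat) \<Rightarrow> real" where "pi x = (\<Sum>k. trm x k)"
definition a :: "nat \<Rightarrow> real" where "a k = eps k * real (r k)"
definition mm :: "nat \<Rightarrow> real" where "mm n = eps n * lam n ^ t n"

abbreviation "G \<equiv> odometer_space s"
abbreviation "T \<equiv> odometer_map s"

lemma t_pos: "0 < t n" using pos by (simp add: t_def)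

lemma t_dvd: "t n dvd t (Suc n)" using dvd by (simp add: t_def)

lemma t_le: "t n \<le> t (Suc n)"
  using pos incr by (auto simp: t_def Suc_le_eq less_imp_le)

lemma t_lt: "n \<ge> 1 \<Longrightarrow> t n < t (Suc n)"
  using incr by (auto simp: t_def)

lemma t_mul: "t (Suc n) = t n * r n"
  using t_dvd by (simp add: r_def)

lemma r_pos: "r n \<ge> 1"
proof -
  have "t n * 1 \<le> t n * r n" using t_le t_mul by simp
  thus ?thesis using t_pos by simp
qed

lemma t_dvd_le: "k \<le> m \<Longrightarrow> t k dvd t m"
proof (induction m)
  case 0 thus ?case by simp
next
  case (Suc m) thus ?case
    by (metis dvd_trans le_Suc_eq t_dvd dvd_refl)
qed

lemma G_0: "x \<in> G \<Longrightarrow> x 0 = 0" by (simp add: odometer_space_def)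
lemma G_lt: assumes "x \<in> G" shows "x n < t n"
proof (cases "n = 0")
  case True thus ?thesis using G_0[OF assms] by (simp add: t_def)
next
  case False
  hence "n \<ge> 1" by simp
  hence "x n < s n" using assms unfolding odometer_space_def by blast
  thus ?thesis using False by (simp add: t_def)
qed
lemma G_mod: assumes "x \<in> G" shows "x n = x (Suc n) mod t n"
proof (cases "n = 0")
  case True thus ?thesis using G_0[OF assms] by (simp add: t_def)
next
  case False
  hence "n \<ge> 1" by simp
  hence "x n = x (Suc n) mod s n" using assms unfolding odometer_space_def by blast
  thus ?thesis using False by (simp add: t_def)
qed

lemma G_mod_le: assumes "x \<in> G" "k \<le> m" shows "x k = x m mod t k"
  using assms(2)
proof (induction m)
  case 0 thus ?case using G_lt[OF assms(1)] by simp
next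
  case (Suc m)
  show ?case
  proof (cases "k = Suc m")
    case True thus ?thesis using G_lt[OF assms(1)] by simp
  next
    case False
    hence "k \<le> m" using Suc by simp
    hence "x k = x m mod t k" using Suc by simp
    also have "\<dots> = (x (Suc m) mod t m) mod t k" using G_mod[OF assms(1)] by metis
    also have "\<dots> = x (Suc m) mod t k" using t_dvd_le[OF \<open>k \<le> m\<close>] by (simp add: mod_mod_cancel)
    finally show ?thesis .
  qed
qed

lemma digit_lt: assumes "x \<in> G" shows "x (Suc k) div t k < r k"
proof -
  have "x (Suc k) < t k * r k" using G_lt[OF assms] t_mul by metis
  thus ?thesis using t_pos by (simp add: less_mult_imp_div_less mult.commute)
qed

lemma digit_decomp: assumes "x \<in> G" shows "x (Suc k) = x k + t k * (x (Suc k) div t k)"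
  using G_mod[OF assms, of k] by simp

lemma T_G: assumes "x \<in> G" shows "T x \<in> G"
proof -
  have "T x n = T x (Suc n) mod s n" if "n \<ge> 1" for n
  proof -
    have "T x (Suc n) mod s n = ((x (Suc n) + 1) mod s (Suc n)) mod s n"
      by (simp add: odometer_map_def)
    also have "\<dots> = (x (Suc n) + 1) mod s n" using dvd that by (simp add: mod_mod_cancel)
    also have "\<dots> = (x (Suc n) mod s n + 1) mod s n" by (metis mod_add_left_eq)
    also have "\<dots> = (x n + 1) mod s n"
    proof -
      have "x n = x (Suc n) mod s n" using assms that unfolding odometer_space_def by blast
      thus ?thesis by simp
    qed
    finally show ?thesis using that by (simp add: odometer_map_def)
  qed
  moreover have "T x n < s n" if "n \<ge> 1" for n using pos that by (simp add: odometer_map_def)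
  moreover have "T x 0 = 0" by (simp add: odometer_map_def)
  ultimately show ?thesis unfolding odometer_space_def mem_Collect_eq by blast
qed

lemma T_t: "T x n = (x n + 1) mod t n \<or> n = 0"
  by (auto simp: odometer_map_def t_def)

lemma T_0: "T x 0 = 0" by (simp add: odometer_map_def)

lemma lam_pos: "0 < lam n" by (simp add: lam_def)
lemma lam_le1: "lam n \<le> 1"
proof -
  have "1 \<le> 2 * (real (r n) + 1)" by simp
  also have "\<dots> \<le> 2 * (real (r n) + 1) * (real n + 1)" by simp
  finally show ?thesis unfolding lam_def by simp
qed

lemma eps_pos: "0 < eps n"
proof (induction n)
  case 0 thus ?case by simp
next
  case (Suc n)
  have "0 < real (r (Suc n))" using r_pos[of "Suc n"] by simp
  thus ?case using Suc lam_pos[of n] by simp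
qed

lemma rho_lt: "rho n c < t n" using t_pos by (simp add: rho_def)

lemma mm_le_w: "mm n \<le> w n c"
  unfolding mm_def w_def
  using eps_pos[of n] lam_pos[of n] lam_le1[of n] rho_lt[of n c]
  by (simp add: power_decreasing)

lemma w_le: "w n c \<le> eps n"
  unfolding w_def using eps_pos[of n] lam_pos[of n] lam_le1[of n]
  by (simp add: power_le_one mult_left_le)

lemma w_pos: "0 < w n c" unfolding w_def using eps_pos lam_pos by simp

lemma mm_pos: "0 < mm n" unfolding mm_def using eps_pos lam_pos by simp

lemma a_Suc: "a (Suc n) = mm n / 8"
  using r_pos[of "Suc n"] by (simp add: a_def mm_def)

lemma mm_le_a: "mm n \<le> a n"
proof -
  have "mm n \<le> eps n" unfolding mm_def using eps_pos[of n] lam_pos[of n] lam_le1[of n]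
    by (simp add: power_le_one mult_left_le)
  also have "\<dots> \<le> a n" unfolding a_def using eps_pos[of n] r_pos[of n] by simp
  finally show ?thesis .
qed

lemma a_geom: "a (i + n) \<le> a n * (1/8) ^ i"
proof (induction i)
  case 0 thus ?case by simp
next
  case (Suc i)
  have "a (Suc i + n) = mm (i + n) / 8" using a_Suc by simp
  also have "\<dots> \<le> a (i + n) / 8" using mm_le_a by simp
  also have "\<dots> \<le> a n * (1/8)^i / 8" using Suc by simp
  finally show ?case by simp
qed

lemma mm_Suc: "mm (Suc n) \<le> mm n"
  using mm_le_a[of "Suc n"] a_Suc[of n] mm_pos[of n] by simp

lemma mm_anti: "n \<le> N \<Longrightarrow> mm N \<le> mm n"
  using lift_Suc_antimono_le[of mm] mm_Suc by blast

lemma trm_bound: assumes "x \<in> G" shows "\<bar>trm x k\<bar> \<le> a k"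
proof -
  have "real (x (Suc k) div t k) \<le> real (r k)" using digit_lt[OF assms, of k] by simp
  have "w k (x k) * real (x (Suc k) div t k) \<le> eps k * real (x (Suc k) div t k)"
    by (rule mult_right_mono[OF w_le]) simp
  also have "\<dots> \<le> eps k * real (r k)"
    by (rule mult_left_mono[OF \<open>real (x (Suc k) div t k) \<le> real (r k)\<close>]) (use eps_pos[of k] in simp)
  finally have "w k (x k) * real (x (Suc k) div t k) \<le> eps k * real (r k)" .
  moreover have "0 \<le> w k (x k) * real (x (Suc k) div t k)" using w_pos[of k "x k"] by simp
  ultimately show ?thesis unfolding trm_def a_def by simp
qed

lemma a_summable: "summable a"
proof -
  have "summable (\<lambda>i. a 0 * (1/8)^i)" by (simp add: summable_geometric)
  thus ?thesis
  proof (rule summable_comparison_test'[where N=0])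
    fix n :: nat assume "n \<ge> 0"
    have "0 \<le> a n" unfolding a_def using eps_pos[of n] by simp
    thus "norm (a n) \<le> a 0 * (1/8)^n" using a_geom[of n 0] by simp
  qed
qed

lemma trm_summable: "x \<in> G \<Longrightarrow> summable (trm x)"
  by (rule summable_comparison_test'[OF a_summable, where N=0]) (simp add: trm_bound)

lemma first_diff:
  assumes "x \<in> G" "y \<in> G" "x \<noteq> y"
  obtains n where "\<forall>k\<le>n. x k = y k" "x (Suc n) \<noteq> y (Suc n)"
proof -
  from assms(3) obtain m0 where "x m0 \<noteq> y m0" by auto
  define m where "m = (LEAST m. x m \<noteq> y m)"
  have m: "x m \<noteq> y m" unfolding m_def by (rule LeastI[of _ m0]) fact
  have lt: "k < m \<Longrightarrow> x k = y k" for k unfolding m_def using not_less_Least by blast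
  have "m \<noteq> 0"
  proof
    assume "m = 0"
    thus False using m G_0[OF assms(1)] G_0[OF assms(2)] by simp
  qed
  then obtain n where "m = Suc n" using not0_implies_Suc by blast
  show ?thesis
  proof (rule that)
    show "\<forall>k\<le>n. x k = y k" using lt \<open>m = Suc n\<close> by auto
    show "x (Suc n) \<noteq> y (Suc n)" using m \<open>m = Suc n\<close> by simp
  qed
qed

lemma pi_bounds:
  assumes x: "x \<in> G" and y: "y \<in> G" and eq: "\<forall>k\<le>n. x k = y k" and ne: "x (Suc n) \<noteq> y (Suc n)"
  shows "w n (x n) / 2 \<le> \<bar>pi x - pi y\<bar>" "\<bar>pi x - pi y\<bar> \<le> w n (x n) * (real (r n) + 1)"
proof -
  define \<delta> where "\<delta> k = trm x k - trm y k" for k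
  have sd: "summable \<delta>" unfolding \<delta>_def using trm_summable[OF x] trm_summable[OF y] by (rule summable_diff)
  have zero: "\<delta> k = 0" if "k < n" for k
    using eq that unfolding \<delta>_def trm_def by (simp add: Suc_leI)
  have "pi x - pi y = suminf \<delta>"
    unfolding pi_def \<delta>_def using trm_summable[OF x] trm_summable[OF y] by (simp add: suminf_diff)
  also have "\<dots> = (\<Sum>i. \<delta> (i + n))"
    using suminf_split_initial_segment[OF sd, of n] zero by simp
  finally have e1: "pi x - pi y = (\<Sum>i. \<delta> (i + n))" .
  have sd2: "summable (\<lambda>i. \<delta> (i + n))" using sd summable_iff_shift by blast
  define R where "R = (\<Sum>i. \<delta> (Suc i + n))"
  have e2: "pi x - pi y = \<delta> n + R"
    using suminf_split_head[OF sd2] e1 unfolding R_def by simp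
  have bnd: "\<bar>\<delta> (Suc i + n)\<bar> \<le> 2 * a (Suc n) * (1/8)^i" for i
  proof -
    have "\<bar>\<delta> (Suc i + n)\<bar> \<le> a (i + Suc n) + a (i + Suc n)"
      unfolding \<delta>_def using trm_bound[OF x, of "i + Suc n"] trm_bound[OF y, of "i + Suc n"] by simp
    also have "\<dots> \<le> 2 * a (Suc n) * (1/8)^i" using a_geom[of i "Suc n"] by simp
    finally show ?thesis .
  qed
  have sg: "summable (\<lambda>i. 2 * a (Suc n) * (1/8::real)^i)"
    by (intro summable_mult summable_geometric) simp
  have "\<bar>R\<bar> \<le> (\<Sum>i. \<bar>\<delta> (Suc i + n)\<bar>)" unfolding R_def
    by (rule summable_rabs, rule summable_rabs_comparison_test[OF _ sg]) (use bnd in blast)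
  also have "\<dots> \<le> (\<Sum>i. 2 * a (Suc n) * (1/8)^i)"
    by (rule suminf_le[OF bnd _ sg], rule summable_rabs_comparison_test[OF _ sg]) (use bnd in blast)
  also have "\<dots> = 2 * a (Suc n) * (\<Sum>i. (1/8::real)^i)"
    by (rule suminf_mult) (simp add: summable_geometric)
  also have "\<dots> = (2/7) * mm n" by (simp add: suminf_geometric a_Suc)
  finally have Rb: "\<bar>R\<bar> \<le> (2/7) * w n (x n)" using mm_le_w[of n "x n"] by simp
  define dx where "dx = x (Suc n) div t n"
  define dy where "dy = y (Suc n) div t n"
  have "dx \<noteq> dy" using digit_decomp[OF x, of n] digit_decomp[OF y, of n] eq ne
    unfolding dx_def dy_def by auto
  hence d1: "1 \<le> \<bar>real dx - real dy\<bar>" by linarith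
  have d2: "\<bar>real dx - real dy\<bar> \<le> real (r n)"
    using digit_lt[OF x, of n] digit_lt[OF y, of n] unfolding dx_def dy_def by linarith
  have dn: "\<delta> n = w n (x n) * (real dx - real dy)"
    unfolding \<delta>_def trm_def dx_def dy_def using eq by (simp add: algebra_simps)
  have wp: "0 < w n (x n)" by (rule w_pos)
  have "\<bar>\<delta> n\<bar> = w n (x n) * \<bar>real dx - real dy\<bar>" using dn wp by (simp add: abs_mult)
  hence l: "w n (x n) \<le> \<bar>\<delta> n\<bar>" and u: "\<bar>\<delta> n\<bar> \<le> w n (x n) * real (r n)"
    using mult_left_mono[OF d1, of "w n (x n)"] mult_left_mono[OF d2, of "w n (x n)"] wp by auto
  show "w n (x n) / 2 \<le> \<bar>pi x - pi y\<bar>" using e2 l Rb wp by linarith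
  show "\<bar>pi x - pi y\<bar> \<le> w n (x n) * (real (r n) + 1)" using e2 u Rb wp by (simp add: algebra_simps)
qed

lemma modsuc_inj: "i < (m::nat) \<Longrightarrow> j < m \<Longrightarrow> (i + 1) mod m = (j + 1) mod m \<Longrightarrow> i = j"
  by (auto simp: mod_Suc split: if_splits)

lemma T_first_diff:
  assumes x: "x \<in> G" and y: "y \<in> G" and eq: "\<forall>k\<le>n. x k = y k" and ne: "x (Suc n) \<noteq> y (Suc n)"
  shows "\<forall>k\<le>n. T x k = T y k" "T x (Suc n) \<noteq> T y (Suc n)"
proof -
  show "\<forall>k\<le>n. T x k = T y k" using eq by (simp add: odometer_map_def)
  have "T x (Suc n) = (x (Suc n) + 1) mod t (Suc n)" "T y (Suc n) = (y (Suc n) + 1) mod t (Suc n)"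
    by (simp_all add: odometer_map_def t_def)
  thus "T x (Suc n) \<noteq> T y (Suc n)" using modsuc_inj[OF G_lt[OF x] G_lt[OF y]] ne by metis
qed

lemma rho_step:
  assumes n: "n \<ge> 2" and c: "c < t n" and cb: "c \<noteq> t (n - 1)"
  shows "rho n ((c + 1) mod t n) = Suc (rho n c)"
proof -
  define M where "M = t n"
  define p where "p = t (n - 1)"
  have pM: "p < M" unfolding p_def M_def using t_lt[of "n - 1"] n by simp
  have p1: "1 \<le> p" unfolding p_def using t_pos[of "n - 1"] by simp
  define u where "u = M - p - 1"
  have gen: "rho n z = (z + u) mod M" for z
  proof -
    have "z + M - p - 1 = z + u" unfolding u_def using pM by linarith
    thus ?thesis unfolding rho_def M_def[symmetric] p_def[symmetric] by simp
  qed
  have r1: "rho n c = (c + u) mod M" by (rule gen)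
  have "rho n ((c + 1) mod t n) = ((c + 1) mod M + u) mod M" using gen M_def by simp
  also have "\<dots> = (c + 1 + u) mod M" by (rule mod_add_left_eq)
  finally have r2: "rho n ((c + 1) mod t n) = (Suc (c + u)) mod M" by simp
  have ne: "(c + u) mod M \<noteq> M - 1"
  proof (cases "c < p")
    case True
    hence "c + u < M - 1" unfolding u_def using pM p1 by linarith
    thus ?thesis by simp
  next
    case False
    hence cp: "c > p" using cb p_def by simp
    have cM: "c < M" using c M_def by simp
    have eqc: "c + u = (c - p - 1) + M" unfolding u_def using cp pM by linarith
    have "(c + u) mod M = ((c - p - 1) + M) mod M" using eqc by simp
    also have "\<dots> = (c - p - 1) mod M" by simp
    also have "\<dots> = c - p - 1" using cM by simp
    finally show ?thesis using cM cp p1 by linarith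
  qed
  have "Suc ((c + u) mod M) \<noteq> M" using ne by linarith
  thus ?thesis using r1 r2 by (simp add: mod_Suc)
qed

lemma w_step:
  assumes "n \<ge> 2" "c < t n" "c \<noteq> t (n - 1)"
  shows "w n ((c + 1) mod t n) = w n c * lam n"
  using rho_step[OF assms] by (simp add: w_def)

lemma bad_bound:
  assumes x: "x \<in> G"
  shows "\<exists>B. \<forall>n\<ge>2. x n = t (n - 1) \<longrightarrow> n \<le> B"
proof (cases "\<exists>n\<ge>2. x n = t (n - 1)")
  case False thus ?thesis by blast
next
  case True
  then obtain n0 where n0: "n0 \<ge> 2" "x n0 = t (n0 - 1)" by blast
  have "n \<le> n0" if "n \<ge> 2" "x n = t (n - 1)" for n
  proof (rule ccontr)
    assume "\<not> n \<le> n0"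
    hence le: "n0 \<le> n - 1" by simp
    have "x (n - 1) = x n mod t (n - 1)" using G_mod_le[OF x, of "n - 1" n] by simp
    hence "x (n - 1) = 0" using that by simp
    hence "x n0 = 0" using G_mod_le[OF x le] by simp
    thus False using n0 t_pos[of "n0 - 1"] by simp
  qed
  thus ?thesis by blast
qed

lemma pi_inj: "inj_on pi G"
proof (rule inj_onI, rule ccontr)
  fix x y assume x: "x \<in> G" and y: "y \<in> G" and eq: "pi x = pi y" and ne: "x \<noteq> y"
  obtain n where "\<forall>k\<le>n. x k = y k" "x (Suc n) \<noteq> y (Suc n)" using first_diff[OF x y ne] by blast
  from pi_bounds(1)[OF x y this] w_pos[of n "x n"] eq show False by simp
qed

lemma pi_cont: "continuous_on G pi"
  unfolding continuous_on_def
proof (intro ballI tendstoI)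
  fix x e assume x: "x \<in> G" and e: "(0::real) < e"
  have a0: "0 < a 0" using r_pos[of 0] by (simp add: a_def)
  obtain M where M: "(1/8::real)^M < e / (2 * a 0)"
    using real_arch_pow_inv[of "e / (2 * a 0)" "1/8"] e a0 by auto
  have op: "open ((\<lambda>y::nat\<Rightarrow>nat. y M) -` {x M})"
    using continuous_on_open_vimage[of UNIV "\<lambda>y::nat\<Rightarrow>nat. y M"] continuous_on_product_coordinates
      open_discrete by auto
  show "\<forall>\<^sub>F y in at x within G. dist (pi y) (pi x) < e"
    unfolding eventually_at_topological
  proof (intro exI conjI ballI impI)
    show "open ((\<lambda>y::nat\<Rightarrow>nat. y M) -` {x M})" by (rule op)
    show "x \<in> (\<lambda>y::nat\<Rightarrow>nat. y M) -` {x M}" by simp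
    fix y assume yS: "y \<in> (\<lambda>y::nat\<Rightarrow>nat. y M) -` {x M}" and ne: "y \<noteq> x" and y: "y \<in> G"
    obtain n where eq: "\<forall>k\<le>n. x k = y k" and nd: "x (Suc n) \<noteq> y (Suc n)"
      using first_diff[OF x y] ne by metis
    have nM: "M \<le> n"
    proof (rule ccontr)
      assume "\<not> M \<le> n"
      hence sM: "Suc n \<le> M" by simp
      have "x (Suc n) = y (Suc n)" using G_mod_le[OF x sM] G_mod_le[OF y sM] yS by simp
      thus False using nd by simp
    qed
    have "\<bar>pi x - pi y\<bar> \<le> w n (x n) * (real (r n) + 1)" by (rule pi_bounds(2)[OF x y eq nd])
    also have "\<dots> \<le> eps n * (real (r n) + 1)" using w_le by (simp add: mult_right_mono)
    also have "\<dots> \<le> 2 * a n" using r_pos[of n] eps_pos[of n] unfolding a_def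
      by (simp add: algebra_simps)
    also have "\<dots> \<le> 2 * (a 0 * (1/8)^n)" using a_geom[of n 0] by simp
    also have "\<dots> \<le> 2 * (a 0 * (1/8)^M)" using a0 nM by (simp add: power_decreasing)
    also have "\<dots> < e" using M a0 by (simp add: field_simps)
    finally show "dist (pi y) (pi x) < e" by (simp add: dist_real_def abs_minus_commute)
  qed
qed

lemma pi_deriv:
  assumes x: "x \<in> G"
  shows "rel_deriv_is (pi \<circ> T \<circ> inv_into G pi) (pi ` G) (pi x) 0"
  unfolding rel_deriv_is_def
proof (rule tendstoI)
  fix e :: real assume e: "0 < e"
  obtain B where B: "\<forall>n\<ge>2. x n = t (n - 1) \<longrightarrow> n \<le> B" using bad_bound[OF x] by blast
  obtain N0 where N0: "inverse (real (Suc N0)) < e" using reals_Archimedean[OF e] by blast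
  define N where "N = max (max B N0) 2"
  show "\<forall>\<^sub>F q in at (pi x) within pi ` G.
          dist (((pi \<circ> T \<circ> inv_into G pi) q - (pi \<circ> T \<circ> inv_into G pi) (pi x)) / (q - pi x)) 0 < e"
    unfolding eventually_at
  proof (intro exI conjI ballI impI)
    show "0 < mm N / 2" using mm_pos by simp
    fix q assume q: "q \<in> pi ` G" and qd: "q \<noteq> pi x \<and> dist q (pi x) < mm N / 2"
    then obtain y where y: "y \<in> G" and qy: "q = pi y" by blast
    have ne: "x \<noteq> y" using qd qy by auto
    obtain n where eq: "\<forall>k\<le>n. x k = y k" and nd: "x (Suc n) \<noteq> y (Suc n)"
      using first_diff[OF x y ne] by blast
    have lb: "w n (x n) / 2 \<le> \<bar>pi x - pi y\<bar>" by (rule pi_bounds(1)[OF x y eq nd])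
    have nN: "N < n"
    proof (rule ccontr)
      assume "\<not> N < n"
      hence "mm N \<le> mm n" using mm_anti by simp
      also have "\<dots> \<le> w n (x n)" by (rule mm_le_w)
      finally show False using lb qd qy by (simp add: dist_real_def abs_minus_commute)
    qed
    hence n2: "n \<ge> 2" and nB: "\<not> n \<le> B" and nN0: "N0 \<le> n" unfolding N_def by auto
    have good: "x n \<noteq> t (n - 1)" using B n2 nB by blast
    have Txn: "T x n = (x n + 1) mod t n" using n2 by (simp add: odometer_map_def t_def)
    have wT: "w n (T x n) = w n (x n) * lam n"
      using w_step[OF n2 G_lt[OF x] good] Txn by simp
    have ub: "\<bar>pi (T x) - pi (T y)\<bar> \<le> w n (x n) * lam n * (real (r n) + 1)"
      using pi_bounds(2)[OF T_G[OF x] T_G[OF y] T_first_diff[OF x y eq nd]] wT by simp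
    have fy: "(pi \<circ> T \<circ> inv_into G pi) q = pi (T y)" using qy y pi_inj by (simp add: inv_into_f_f)
    have fx: "(pi \<circ> T \<circ> inv_into G pi) (pi x) = pi (T x)" using x pi_inj by (simp add: inv_into_f_f)
    define W where "W = w n (x n)"
    have W: "0 < W" unfolding W_def by (rule w_pos)
    have K: "2 * lam n * (real (r n) + 1) = 1 / (real n + 1)"
    proof -
      define A where "A = real (r n) + 1"
      define Bn where "Bn = real n + 1"
      have A: "A > 0" unfolding A_def by simp
      have Bn: "Bn > 0" unfolding Bn_def by simp
      have "2 * (1 / (2 * A * Bn)) * A = 1 / Bn" using A Bn by (simp add: field_simps)
      thus ?thesis unfolding lam_def A_def Bn_def .
    qed
    have Dpos: "0 < \<bar>pi x - pi y\<bar>" using lb W W_def by linarith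
    have "\<bar>pi (T x) - pi (T y)\<bar> \<le> (2 * lam n * (real (r n) + 1)) * (W / 2)"
      using ub unfolding W_def by (simp add: algebra_simps)
    also have "\<dots> \<le> (2 * lam n * (real (r n) + 1)) * \<bar>pi x - pi y\<bar>"
      using lb lam_pos[of n] unfolding W_def by (intro mult_left_mono) auto
    finally have "\<bar>pi (T x) - pi (T y)\<bar> / \<bar>pi x - pi y\<bar> \<le> 1 / (real n + 1)"
      using Dpos K by (simp add: pos_divide_le_eq)
    also have "\<dots> \<le> inverse (real (Suc N0))" using nN0 by (simp add: field_simps)
    also have "\<dots> < e" by (rule N0)
    finally have fin: "\<bar>pi (T x) - pi (T y)\<bar> / \<bar>pi x - pi y\<bar> < e" .
    have "dist ((pi (T y) - pi (T x)) / (pi y - pi x)) 0 = \<bar>pi (T x) - pi (T y)\<bar> / \<bar>pi x - pi y\<bar>"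
      by (simp add: dist_real_def abs_minus_commute)
    thus "dist (((pi \<circ> T \<circ> inv_into G pi) q - (pi \<circ> T \<circ> inv_into G pi) (pi x)) / (q - pi x)) 0 < e"
      using fin fx fy qy by simp
  qed
qed

lemma main:
  "\<exists>\<pi> :: (nat \<Rightarrow> nat) \<Rightarrow> real.
           continuous_on (odometer_space s) \<pi> \<and> inj_on \<pi> (odometer_space s) \<and>
           (\<forall>x\<in>\<pi> ` odometer_space s.
              rel_deriv_is (\<pi> \<circ> odometer_map s \<circ> inv_into (odometer_space s) \<pi>)
                (\<pi> ` odometer_space s) x 0)"
  using pi_cont pi_inj pi_deriv by blast

end

theorem theorem3p1:
  fixes s :: "nat \<Rightarrow> nat"
  assumes pos: "\<forall>n\<ge>1. 0 < s n"
    and incr: "\<forall>n\<ge>1. s n < s (Suc n)"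
    and dvd: "\<forall>n\<ge>1. s n dvd s (Suc n)"
  shows "\<exists>\<pi> :: (nat \<Rightarrow> nat) \<Rightarrow> real.
           continuous_on (odometer_space s) \<pi> \<and> inj_on \<pi> (odometer_space s) \<and>
           (\<forall>x\<in>\<pi> ` odometer_space s.
              rel_deriv_is (\<pi> \<circ> odometer_map s \<circ> inv_into (odometer_space s) \<pi>)
                (\<pi> ` odometer_space s) x 0)"
proof -
  interpret odo s using pos incr dvd by unfold_locales
  show ?thesis by (rule main)
qed

end
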